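(* Let $H=(V,E)$ be a graph, $t\ge 1$ an integer, and let $E_1,\dots,E_s\subseteq E$ be sets of edges each of size at most $t$, such that for every $1\le i<j\le s$ the graph $(V,E\setminus(E_i\cup E_j))$ is disconnected. If $s>(2^t+1)2^{t-1}$, then $m(H)\le 2^t$.
   Context: All graphs are finite and simple. For graphs $G_1=(V,E_1)$, $G_2=(V,E_2)$ on the same vertex set, their symmetric difference is the graph $(V,E_1\oplus E_2)$, where $E_1\oplus E_2$ is the set of edges belonging to exactly one of $E_1,E_2$. For a graph $H=(V,E)$, a spanning subgraph of $H$ is a graph $(V,E')$ with $E'\subseteq E$. A connectivity code for $H$ is a collection $\mathcal G$ of distinct spanning subgraphs of $H$ such that the symmetric difference of any two distinct members of $\mathcal G$ is a connected graph on the vertex set $V$. $m(H)$ denotes the maximum cardinality of a connectivity code for $H$. *)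

theory Defs
  imports Main
begin

definition simple_graph :: "'a set \<Rightarrow> 'a set set \<Rightarrow> bool" where
  "simple_graph V E \<longleftrightarrow> finite V \<and> (\<forall>e\<in>E. e \<subseteq> V \<and> card e = 2)"

definition adj_rel :: "'a set set \<Rightarrow> ('a \<times> 'a) set" where
  "adj_rel E = {(u, v). {u, v} \<in> E}"

definition connected_graph :: "'a set \<Rightarrow> 'a set set \<Rightarrow> bool" where
  "connected_graph V E \<longleftrightarrow> V \<noteq> {} \<and> (\<forall>u\<in>V. \<forall>v\<in>V. (u, v) \<in> (adj_rel E)\<^sup>*)"

text \<open>A connectivity code for H = (V,E): a collection of distinct spanning subgraphs (given by
  their edge sets E' \<subseteq> E) such that the symmetric difference of any two distinct members is
  a connected graph on V.\<close>

definition connectivity_code :: "'a set \<Rightarrow> 'a set set \<Rightarrow> 'a set set set \<Rightarrow> bool" where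
  "connectivity_code V E G \<longleftrightarrow>
     (\<forall>F\<in>G. F \<subseteq> E) \<and>
     (\<forall>F1\<in>G. \<forall>F2\<in>G. F1 \<noteq> F2 \<longrightarrow> connected_graph V ((F1 - F2) \<union> (F2 - F1)))"

definition max_code :: "'a set \<Rightarrow> 'a set set \<Rightarrow> nat" where
  "max_code V E = Max (card ` {G. connectivity_code V E G})"

end

theory Submission
  imports Defs
begin

lemma conn_mono:
  assumes "connected_graph V A" "A \<subseteq> B"
  shows "connected_graph V B"
proof -
  have "adj_rel A \<subseteq> adj_rel B" using assms(2) unfolding adj_rel_def by auto
  hence "(adj_rel A)\<^sup>* \<subseteq> (adj_rel B)\<^sup>*" by (rule rtrancl_mono)
  thus ?thesis using assms(1) unfolding connected_graph_def by blast
qed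

lemma code_bound:
  fixes V :: "'a set" and E :: "'a set set" and t s :: nat and Es :: "nat \<Rightarrow> 'a set set"
  assumes fin: "finite E"
    and "t \<ge> 1"
    and A3: "\<And>i. 1 \<le> i \<Longrightarrow> i \<le> s \<Longrightarrow> Es i \<subseteq> E \<and> card (Es i) \<le> t"
    and A4: "\<And>i j. 1 \<le> i \<Longrightarrow> i < j \<Longrightarrow> j \<le> s \<Longrightarrow>
           \<not> connected_graph V (E - (Es i \<union> Es j))"
    and A5: "s > (2 ^ t + 1) * 2 ^ (t - 1)"
    and code: "connectivity_code V E G"
  shows "card G \<le> 2 ^ t"
proof (rule ccontr)
  assume "\<not> card G \<le> 2 ^ t"
  hence cg: "2 ^ t + 1 \<le> card G" by simp
  have GE: "\<forall>F\<in>G. F \<subseteq> E" using code unfolding connectivity_code_def by blast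
  have "finite G"
  proof -
    have "G \<subseteq> Pow E" using GE by auto
    thus ?thesis using fin finite_subset by blast
  qed
  obtain G' where G': "G' \<subseteq> G" "card G' = 2 ^ t + 1" and fG': "finite G'"
    by (rule obtain_subset_with_card_n[OF cg])
  define Q where "Q i B = (B \<subseteq> G' \<and> card B = 2 \<and> (\<forall>F\<in>B. \<forall>F'\<in>B. F \<inter> Es i = F' \<inter> Es i))" for i B
  have exQ: "\<exists>B. Q i B" if "1 \<le> i" "i \<le> s" for i
  proof -
    have Ei: "Es i \<subseteq> E" "card (Es i) \<le> t" using A3 that by auto
    have fEi: "finite (Es i)" using Ei fin finite_subset by blast
    have img: "(\<lambda>F. F \<inter> Es i) ` G' \<subseteq> Pow (Es i)" by auto
    have "card (Pow (Es i)) = 2 ^ card (Es i)" using fEi card_Pow by blast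
    also have "\<dots> \<le> 2 ^ t" using Ei(2) by (simp add: power_increasing)
    finally have c1: "card (Pow (Es i)) \<le> 2 ^ t" .
    have c2: "card ((\<lambda>F. F \<inter> Es i) ` G') \<le> card (Pow (Es i))"
      by (rule card_mono[OF _ img]) (simp add: fEi)
    have "\<not> inj_on (\<lambda>F. F \<inter> Es i) G'"
    proof
      assume "inj_on (\<lambda>F. F \<inter> Es i) G'"
      hence "card ((\<lambda>F. F \<inter> Es i) ` G') = card G'" by (rule card_image)
      thus False using c1 c2 G'(2) by linarith
    qed
    then obtain F1 F2 where F: "F1 \<in> G'" "F2 \<in> G'" "F1 \<noteq> F2" "F1 \<inter> Es i = F2 \<inter> Es i"
      unfolding inj_on_def by blast
    have "Q i {F1, F2}" unfolding Q_def using F by auto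
    thus ?thesis by blast
  qed
  define p where "p i = (SOME B. Q i B)" for i
  have pQ: "Q i (p i)" if "1 \<le> i" "i \<le> s" for i
    unfolding p_def using exQ[OF that] by (rule someI_ex)
  define P where "P = {B. B \<subseteq> G' \<and> card B = 2}"
  have cP: "card P = card G' choose 2" unfolding P_def using n_subsets[OF fG'] by simp
  have "card G' choose 2 = (2 ^ t + 1) * 2 ^ (t - 1)"
  proof -
    obtain k where k: "t = Suc k" using \<open>t \<ge> 1\<close> by (cases t) auto
    have "card G' choose 2 = (2 ^ t + 1) * 2 ^ t div 2" using G'(2) by (simp add: choose_two)
    also have "\<dots> = (2 ^ t + 1) * 2 ^ (t - 1) * 2 div 2"
      using k by (simp only: power_Suc mult.commute mult.left_commute diff_Suc_1)
    also have "\<dots> = (2 ^ t + 1) * 2 ^ (t - 1)" by simp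
    finally show ?thesis .
  qed
  hence cP2: "card P < card {1..s}" using cP A5 by (simp only: card_atLeastAtMost diff_Suc_1)
  have pP: "p ` {1..s} \<subseteq> P" unfolding P_def
    proof
      fix B assume "B \<in> p ` {1..s}"
      then obtain i where "i \<in> {1..s}" "B = p i" by blast
      thus "B \<in> {B. B \<subseteq> G' \<and> card B = 2}" using pQ[of i] unfolding Q_def by auto
    qed
  have "finite P"
  proof (rule finite_subset[of _ "Pow G'"])
    show "P \<subseteq> Pow G'" unfolding P_def by blast
    show "finite (Pow G')" using fG' by simp
  qed
  have "\<not> inj_on p {1..s}"
  proof
    assume "inj_on p {1..s}"
    hence "card (p ` {1..s}) = card {1..s}" by (rule card_image)
    moreover have "card (p ` {1..s}) \<le> card P" using card_mono[OF \<open>finite P\<close> pP] .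
    ultimately show False using cP2 by simp
  qed
  then obtain i j where ij: "i \<in> {1..s}" "j \<in> {1..s}" "i \<noteq> j" "p i = p j"
    unfolding inj_on_def by blast
  have key: "False" if "1 \<le> a" "a < b" "b \<le> s" "p a = p b" for a b
  proof -
    have a1: "a \<le> s" "1 \<le> b" using that by auto
    have Qa: "Q a (p a)" by (rule pQ[OF that(1) a1(1)])
    have Qb: "Q b (p a)" unfolding that(4) by (rule pQ[OF a1(2) that(3)])
    from Qa have "card (p a) = 2" unfolding Q_def by blast
    then obtain F1 F2 where F: "p a = {F1, F2}" "F1 \<noteq> F2" unfolding card_2_iff by blast
    have Qa': "p a \<subseteq> G'" "\<forall>F\<in>p a. \<forall>F'\<in>p a. F \<inter> Es a = F' \<inter> Es a"
      using Qa unfolding Q_def by blast+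
    have Qb': "\<forall>F\<in>p a. \<forall>F'\<in>p a. F \<inter> Es b = F' \<inter> Es b"
      using Qb unfolding Q_def by blast
    have m: "F1 \<in> p a" "F2 \<in> p a" using F(1) by simp_all
    have inG: "F1 \<in> G" "F2 \<in> G" using Qa'(1) m G'(1) by blast+
    have ea: "F1 \<inter> Es a = F2 \<inter> Es a" using Qa'(2) m by blast
    have eb: "F1 \<inter> Es b = F2 \<inter> Es b" using Qb' m by blast
    have con: "connected_graph V ((F1 - F2) \<union> (F2 - F1))"
      using code inG F(2) unfolding connectivity_code_def by blast
    have sub: "(F1 - F2) \<union> (F2 - F1) \<subseteq> E - (Es a \<union> Es b)"
      proof
      fix x assume x: "x \<in> (F1 - F2) \<union> (F2 - F1)"
      have "x \<in> E" using x GE inG by blast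
      moreover have "x \<notin> Es a" using x ea by blast
      moreover have "x \<notin> Es b" using x eb by blast
      ultimately show "x \<in> E - (Es a \<union> Es b)" by simp
    qed
    show False using conn_mono[OF con sub] A4[OF that(1-3)] by simp
  qed
  show False
  proof (cases "i < j")
    case True thus ?thesis using key[of i j] ij by simp
  next
    case False hence "j < i" using ij by simp
    thus ?thesis using key[of j i] ij by simp
  qed
qed

theorem lemma3p1:
  fixes V :: "'a set" and E :: "'a set set" and t s :: nat and Es :: "nat \<Rightarrow> 'a set set"
  assumes "simple_graph V E"
    and "t \<ge> 1"
    and "\<And>i. 1 \<le> i \<Longrightarrow> i \<le> s \<Longrightarrow> Es i \<subseteq> E \<and> card (Es i) \<le> t"
    and "\<And>i j. 1 \<le> i \<Longrightarrow> i < j \<Longrightarrow> j \<le> s \<Longrightarrow>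
           \<not> connected_graph V (E - (Es i \<union> Es j))"
    and "s > (2 ^ t + 1) * 2 ^ (t - 1)"
  shows "max_code V E \<le> 2 ^ t"
proof -
  have fin: "finite E"
  proof -
    have "E \<subseteq> Pow V" using assms(1) unfolding simple_graph_def by auto
    thus ?thesis using assms(1) unfolding simple_graph_def by (meson finite_Pow_iff finite_subset)
  qed
  have fS: "finite {G. connectivity_code V E G}"
  proof -
    have "{G. connectivity_code V E G} \<subseteq> Pow (Pow E)" unfolding connectivity_code_def by auto
    thus ?thesis using fin by (meson finite_Pow_iff finite_subset)
  qed
  have ne: "{G. connectivity_code V E G} \<noteq> {}"
  proof -
    have "connectivity_code V E {}" unfolding connectivity_code_def by simp
    thus ?thesis by blast
  qed
  show ?thesis unfolding max_code_def
    using code_bound[OF fin assms(2-5)] fS ne by (subst Max_le_iff) auto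
qed

end
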